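(* Let $$A= \begin{pmatrix} 1& -2& 2\\ 2&-1& 2\\ 2&-2& 3 \end{pmatrix},\quad B= \begin{pmatrix} 1& 2& 2\\ 2&1& 2\\ 2&2& 3 \end{pmatrix},\quad C= \begin{pmatrix} -1& 2& 2\\ -2&1& 2\\ -2&2& 3 \end{pmatrix},$$ and let $P=(x,y,z)$ be a primitive Pythagorean triple. Then the triangle in $\mathbb{R}^3$ with vertices $AP^\top$, $BP^\top$, $CP^\top$ has inradius $$r= \frac{2xy\sqrt{17}}{3x+3y+\sqrt{9x^2-16xy+9y^2}}$$ and circumradius $$R=\frac{9\sqrt{9x^2-16xy+9y^2}}{\sqrt{17}}.$$
   Context: A primitive Pythagorean triple is a triple $(x,y,z)$ of positive integers with $x^2+y^2=z^2$, $\gcd(x,y)=1$ and $x$ odd. Triples are regarded as row vectors and $\top$ denotes transpose; $\mathbb{R}^3$ carries the Euclidean metric. *)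

theory Defs
  imports "HOL-Analysis.Analysis"
begin

definition primitive_pythagorean_triple :: "int \<Rightarrow> int \<Rightarrow> int \<Rightarrow> bool" where
  "primitive_pythagorean_triple x y z \<longleftrightarrow>
     x > 0 \<and> y > 0 \<and> z > 0 \<and> x^2 + y^2 = z^2 \<and> gcd x y = 1 \<and> odd x"

definition matA :: "real^3^3" where
  "matA = vector [vector [1, -2, 2], vector [2, -1, 2], vector [2, -2, 3]]"

definition matB :: "real^3^3" where
  "matB = vector [vector [1, 2, 2], vector [2, 1, 2], vector [2, 2, 3]]"

definition matC :: "real^3^3" where
  "matC = vector [vector [-1, 2, 2], vector [-2, 1, 2], vector [-2, 2, 3]]"

definition inradius :: "'a::euclidean_space \<Rightarrow> 'a \<Rightarrow> 'a \<Rightarrow> real" where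
  "inradius a b c = (THE r. \<exists>I\<in>convex hull {a, b, c}.
       infdist I (affine hull {a, b}) = r \<and>
       infdist I (affine hull {b, c}) = r \<and>
       infdist I (affine hull {c, a}) = r)"

definition circumradius :: "'a::euclidean_space \<Rightarrow> 'a \<Rightarrow> 'a \<Rightarrow> real" where
  "circumradius a b c = (THE R. \<exists>c0\<in>affine hull {a, b, c}.
       dist c0 a = R \<and> dist c0 b = R \<and> dist c0 c = R)"

end

theory Submission
  imports Defs
begin

lemma line_dist:
  fixes p a b :: "'a::euclidean_space"
  assumes "a \<noteq> b"
  shows "infdist p (affine hull {a,b}) =
     sqrt (inner (p-a) (p-a) - (inner (p-a) (b-a))^2 / inner (b-a) (b-a))"
proof -
  define e where "e = b - a"
  define E where "E = inner e e"
  define m where "m = inner (p-a) e"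
  have E0: "E > 0" using assms by (simp add: E_def e_def)
  have key: "(dist p (a + v *\<^sub>R e))^2 = (inner (p-a) (p-a) - m^2/E) + E*(v - m/E)^2" for v
  proof -
    have "(dist p (a + v *\<^sub>R e))^2 = inner ((p-a) - v *\<^sub>R e) ((p-a) - v *\<^sub>R e)"
      by (simp add: dist_norm power2_norm_eq_inner algebra_simps)
    also have "\<dots> = inner (p-a) (p-a) - 2 * v * m + v^2 * E"
      by (simp add: inner_diff_left inner_diff_right m_def E_def inner_commute power2_eq_square algebra_simps)
    also have "\<dots> = (inner (p-a) (p-a) - m^2/E) + E*(v - m/E)^2"
      using E0 by (simp add: power2_eq_square field_simps)
    finally show ?thesis .
  qed
  have hull: "affine hull {a,b} = {a + v *\<^sub>R e | v. True}"
  proof -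
    have "u *\<^sub>R a + v *\<^sub>R b = a + v *\<^sub>R e" if "u + v = 1" for u v
    proof -
      have "u *\<^sub>R a + v *\<^sub>R b = (u + v) *\<^sub>R a + v *\<^sub>R (b - a)"
        by (simp add: algebra_simps)
      then show ?thesis using that by (simp add: e_def)
    qed
    moreover have "a + v *\<^sub>R e = (1 - v) *\<^sub>R a + v *\<^sub>R b" for v
      by (simp add: e_def algebra_simps)
    ultimately show ?thesis unfolding affine_hull_2 by (auto; metis diff_add_cancel)
  qed
  define R where "R = inner (p-a) (p-a) - m^2/E"
  have R0: "R \<ge> 0" using key[of "m/E"] zero_le_power2[of "dist p (a + (m/E) *\<^sub>R e)"] by (simp add: R_def)
  have "infdist p (affine hull {a,b}) \<le> dist p (a + (m/E) *\<^sub>R e)"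
    by (rule infdist_le) (auto simp: hull)
  also have "\<dots> = sqrt R"
    using key[of "m/E"] by (simp add: R_def real_sqrt_unique)
  finally have le: "infdist p (affine hull {a,b}) \<le> sqrt R" .
  have ge: "sqrt R \<le> infdist p (affine hull {a,b})"
  proof -
    have ne: "affine hull {a,b} \<noteq> {}" by (simp add: hull) blast
    show ?thesis unfolding infdist_notempty[OF ne]
  proof (rule cINF_greatest)
    show "affine hull {a,b} \<noteq> {}" by (rule ne)
  next
    fix q assume "q \<in> affine hull {a,b}"
    then obtain v where q: "q = a + v *\<^sub>R e" by (auto simp: hull)
    have "R \<le> (dist p q)^2" using key[of v] E0 by (simp add: q R_def)
    then show "sqrt R \<le> dist p q" by (simp add: real_le_lsqrt)
  qed
  qed
  show ?thesis using le ge by (simp add: R_def m_def e_def E_def)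
qed

lemma tri_dist:
  fixes a b c :: "'a::euclidean_space"
  assumes "a \<noteq> b" "w \<ge> 0" "u + v + w = 1"
  shows "infdist (u *\<^sub>R a + v *\<^sub>R b + w *\<^sub>R c) (affine hull {a,b}) =
     w * sqrt (inner (c-a) (c-a) - (inner (c-a) (b-a))^2 / inner (b-a) (b-a))"
proof -
  define e where "e = b - a"
  define f where "f = c - a"
  define p where "p = u *\<^sub>R a + v *\<^sub>R b + w *\<^sub>R c"
  have E0: "inner e e > 0" using assms by (simp add: e_def)
  have "p - a = (u + v + w) *\<^sub>R a - a + v *\<^sub>R e + w *\<^sub>R f"
    by (simp add: p_def e_def f_def algebra_simps)
  then have pa: "p - a = v *\<^sub>R e + w *\<^sub>R f" using assms by simp
  have "inner (p-a) (p-a) - (inner (p-a) e)^2 / inner e e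
      = w^2 * (inner f f - (inner f e)^2 / inner e e)"
    using E0 unfolding pa
    by (simp add: inner_add_left inner_add_right inner_commute power2_eq_square field_simps)
  then have "sqrt (inner (p-a) (p-a) - (inner (p-a) e)^2 / inner e e)
      = w * sqrt (inner f f - (inner f e)^2 / inner e e)"
    using assms by (simp add: real_sqrt_mult)
  then show ?thesis using line_dist[OF assms(1), of p] by (simp add: e_def f_def p_def)
qed

lemma inr_generic:
  fixes a b c :: "'a::euclidean_space"
  assumes ab: "a \<noteq> b" and bc: "b \<noteq> c" and ca: "c \<noteq> a"
  defines "hA \<equiv> sqrt (inner (a-b) (a-b) - (inner (a-b) (c-b))^2 / inner (c-b) (c-b))"
      and "hB \<equiv> sqrt (inner (b-c) (b-c) - (inner (b-c) (a-c))^2 / inner (a-c) (a-c))"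
      and "hC \<equiv> sqrt (inner (c-a) (c-a) - (inner (c-a) (b-a))^2 / inner (b-a) (b-a))"
  assumes pos: "hA > 0" "hB > 0" "hC > 0"
  shows "inradius a b c = 1 / (1/hA + 1/hB + 1/hC)"
proof -
  have dist3: "infdist (u *\<^sub>R a + v *\<^sub>R b + w *\<^sub>R c) (affine hull {a,b}) = w * hC \<and>
     infdist (u *\<^sub>R a + v *\<^sub>R b + w *\<^sub>R c) (affine hull {b,c}) = u * hA \<and>
     infdist (u *\<^sub>R a + v *\<^sub>R b + w *\<^sub>R c) (affine hull {c,a}) = v * hB"
    if "u \<ge> 0" "v \<ge> 0" "w \<ge> 0" "u + v + w = 1" for u v w
  proof (intro conjI)
    show "infdist (u *\<^sub>R a + v *\<^sub>R b + w *\<^sub>R c) (affine hull {a,b}) = w * hC"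
      using tri_dist[OF ab, of w u v c] that by (simp add: hC_def)
    have "u *\<^sub>R a + v *\<^sub>R b + w *\<^sub>R c = v *\<^sub>R b + w *\<^sub>R c + u *\<^sub>R a" by (simp add: algebra_simps)
    then show "infdist (u *\<^sub>R a + v *\<^sub>R b + w *\<^sub>R c) (affine hull {b,c}) = u * hA"
      using tri_dist[OF bc, of u v w a] that by (simp add: hA_def add_ac)
    have "u *\<^sub>R a + v *\<^sub>R b + w *\<^sub>R c = w *\<^sub>R c + u *\<^sub>R a + v *\<^sub>R b" by (simp add: algebra_simps)
    then show "infdist (u *\<^sub>R a + v *\<^sub>R b + w *\<^sub>R c) (affine hull {c,a}) = v * hB"
      using tri_dist[OF ca, of v w u b] that by (simp add: hB_def add_ac)
  qed
  define r0 where "r0 = 1 / (1/hA + 1/hB + 1/hC)"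
  have r0pos: "r0 > 0" using pos by (simp add: r0_def add_pos_pos)
  show ?thesis unfolding inradius_def r0_def[symmetric]
  proof (rule the_equality)
    define u where "u = r0 / hA"
    define v where "v = r0 / hB"
    define w where "w = r0 / hC"
    have "u + v + w = r0 * (1/hA + 1/hB + 1/hC)" by (simp add: u_def v_def w_def algebra_simps)
    also have "\<dots> = 1" proof -
      have "1/hA + 1/hB + 1/hC > 0" using pos by (simp add: add_pos_pos)
      then show ?thesis unfolding r0_def by simp
    qed
    finally have s: "u + v + w = 1" .
    have nn: "u \<ge> 0" "v \<ge> 0" "w \<ge> 0" using pos r0pos by (simp_all add: u_def v_def w_def)
    show "\<exists>I\<in>convex hull {a, b, c}. infdist I (affine hull {a, b}) = r0 \<and>
        infdist I (affine hull {b, c}) = r0 \<and> infdist I (affine hull {c, a}) = r0"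
    proof (rule bexI[of _ "u *\<^sub>R a + v *\<^sub>R b + w *\<^sub>R c"])
      show "u *\<^sub>R a + v *\<^sub>R b + w *\<^sub>R c \<in> convex hull {a, b, c}"
        unfolding convex_hull_3 using nn s by blast
      show "infdist (u *\<^sub>R a + v *\<^sub>R b + w *\<^sub>R c) (affine hull {a, b}) = r0 \<and>
        infdist (u *\<^sub>R a + v *\<^sub>R b + w *\<^sub>R c) (affine hull {b, c}) = r0 \<and>
        infdist (u *\<^sub>R a + v *\<^sub>R b + w *\<^sub>R c) (affine hull {c, a}) = r0"
        using dist3[OF nn s] pos by (simp add: u_def v_def w_def)
    qed
  next
    fix r assume "\<exists>I\<in>convex hull {a, b, c}. infdist I (affine hull {a, b}) = r \<and>
        infdist I (affine hull {b, c}) = r \<and> infdist I (affine hull {c, a}) = r"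
    then obtain u v w where nn: "u \<ge> 0" "v \<ge> 0" "w \<ge> 0" and s: "u + v + w = 1"
      and d: "infdist (u *\<^sub>R a + v *\<^sub>R b + w *\<^sub>R c) (affine hull {a, b}) = r"
        "infdist (u *\<^sub>R a + v *\<^sub>R b + w *\<^sub>R c) (affine hull {b, c}) = r"
        "infdist (u *\<^sub>R a + v *\<^sub>R b + w *\<^sub>R c) (affine hull {c, a}) = r"
      unfolding convex_hull_3 by blast
    have "w = r / hC" "u = r / hA" "v = r / hB" using dist3[OF nn s] d pos by (auto simp: field_simps)
    then have "r * (1/hA + 1/hB + 1/hC) = 1" using s by (simp add: field_simps)
    moreover have "1/hA + 1/hB + 1/hC > 0" using pos by (simp add: add_pos_pos)
    ultimately show "r = r0" unfolding r0_def by (simp add: eq_divide_eq)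
  qed
qed

lemma circ_generic:
  fixes a b c :: "'a::euclidean_space"
  defines "E \<equiv> inner (b-a) (b-a)" and "M \<equiv> inner (b-a) (c-a)" and "F \<equiv> inner (c-a) (c-a)"
  assumes G: "E * F - M^2 \<noteq> 0"
  shows "circumradius a b c = sqrt (E * F * (E + F - 2 * M) / (4 * (E * F - M^2)))"
proof -
  define G where "G = E * F - M^2"
  have G0: "G \<noteq> 0" using G by (simp add: G_def)
  have sq: "(dist (u *\<^sub>R a + v *\<^sub>R b + w *\<^sub>R c) a)^2 = v^2 * E + 2 * v * w * M + w^2 * F \<and>
            (dist (u *\<^sub>R a + v *\<^sub>R b + w *\<^sub>R c) b)^2 = (v-1)^2 * E + 2 * (v-1) * w * M + w^2 * F \<and>
            (dist (u *\<^sub>R a + v *\<^sub>R b + w *\<^sub>R c) c)^2 = v^2 * E + 2 * v * (w-1) * M + (w-1)^2 * F"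
    if "u + v + w = 1" for u v w
  proof -
    have u: "u = 1 - v - w" using that by simp
    have g0: "inner (s *\<^sub>R e + t *\<^sub>R f) (s *\<^sub>R e + t *\<^sub>R f) = s^2 * inner e e + 2 * s * t * inner e f + t^2 * inner f f" for s t and e f :: 'a
      by (simp add: inner_add_left inner_add_right inner_commute[of f e] algebra_simps power2_eq_square)
    have g: "(dist (s *\<^sub>R (b-a) + t *\<^sub>R (c-a)) 0)^2 = s^2 * E + 2 * s * t * M + t^2 * F" for s t
      unfolding dist_norm diff_zero power2_norm_eq_inner g0 E_def M_def F_def ..
    have "dist (u *\<^sub>R a + v *\<^sub>R b + w *\<^sub>R c) a = dist (v *\<^sub>R (b-a) + w *\<^sub>R (c-a)) 0"
      by (simp add: dist_norm u algebra_simps)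
    moreover have "dist (u *\<^sub>R a + v *\<^sub>R b + w *\<^sub>R c) b = dist ((v-1) *\<^sub>R (b-a) + w *\<^sub>R (c-a)) 0"
      by (simp add: dist_norm u algebra_simps)
    moreover have "dist (u *\<^sub>R a + v *\<^sub>R b + w *\<^sub>R c) c = dist (v *\<^sub>R (b-a) + (w-1) *\<^sub>R (c-a)) 0"
      by (simp add: dist_norm u algebra_simps)
    ultimately show ?thesis using g by simp
  qed
  define R0 where "R0 = sqrt (E * F * (E + F - 2 * M) / (4 * G))"
  show ?thesis unfolding circumradius_def R0_def[unfolded G_def, symmetric]
  proof (rule the_equality)
    define v where "v = F * (E - M) / (2 * G)"
    define w where "w = E * (F - M) / (2 * G)"
    define u where "u = 1 - v - w"
    have s: "u + v + w = 1" by (simp add: u_def)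
    have l1: "2 * v * E + 2 * w * M = E"
    proof -
      have "2 * v * E + 2 * w * M = (F * (E - M) * E + E * (F - M) * M) / G"
        unfolding v_def w_def using G0 by (simp add: field_simps)
      also have "F * (E - M) * E + E * (F - M) * M = E * G" by (simp add: G_def power2_eq_square algebra_simps)
      finally show ?thesis using G0 by simp
    qed
    have l2: "2 * v * M + 2 * w * F = F"
    proof -
      have "2 * v * M + 2 * w * F = (F * (E - M) * M + E * (F - M) * F) / G"
        unfolding v_def w_def using G0 by (simp add: field_simps)
      also have "F * (E - M) * M + E * (F - M) * F = F * G" by (simp add: G_def power2_eq_square algebra_simps)
      finally show ?thesis using G0 by simp
    qed
    have q0: "v^2 * E + 2 * v * w * M + w^2 * F = (v * E + w * F) / 2"
    proof -
      have "v^2 * E + 2 * v * w * M + w^2 * F = v * (2 * v * E + 2 * w * M) / 2 + w * (2 * v * M + 2 * w * F) / 2"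
        by (simp add: power2_eq_square field_simps)
      then show ?thesis by (simp only: l1 l2) simp
    qed
    have q1: "v^2 * E + 2 * v * w * M + w^2 * F = E * F * (E + F - 2 * M) / (4 * G)"
      unfolding q0 unfolding v_def w_def using G0 by (simp add: field_simps)
    have q2: "(v-1)^2 * E + 2 * (v-1) * w * M + w^2 * F = E * F * (E + F - 2 * M) / (4 * G)"
    proof -
      have "(v-1)^2 * E + 2 * (v-1) * w * M + w^2 * F = (v^2 * E + 2 * v * w * M + w^2 * F) - (2 * v * E + 2 * w * M) + E"
        by (simp add: power2_eq_square algebra_simps)
      then show ?thesis using l1 q1 by simp
    qed
    have q3: "v^2 * E + 2 * v * (w-1) * M + (w-1)^2 * F = E * F * (E + F - 2 * M) / (4 * G)"
    proof -
      have "v^2 * E + 2 * v * (w-1) * M + (w-1)^2 * F = (v^2 * E + 2 * v * w * M + w^2 * F) - (2 * v * M + 2 * w * F) + F"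
        by (simp add: power2_eq_square algebra_simps)
      then show ?thesis using l2 q1 by simp
    qed
    show "\<exists>c0\<in>affine hull {a, b, c}. dist c0 a = R0 \<and> dist c0 b = R0 \<and> dist c0 c = R0"
    proof (rule bexI[of _ "u *\<^sub>R a + v *\<^sub>R b + w *\<^sub>R c"])
      show "u *\<^sub>R a + v *\<^sub>R b + w *\<^sub>R c \<in> affine hull {a, b, c}"
        unfolding affine_hull_3 using s by blast
      show "dist (u *\<^sub>R a + v *\<^sub>R b + w *\<^sub>R c) a = R0 \<and> dist (u *\<^sub>R a + v *\<^sub>R b + w *\<^sub>R c) b = R0
          \<and> dist (u *\<^sub>R a + v *\<^sub>R b + w *\<^sub>R c) c = R0"
        using sq[OF s] q1 q2 q3 unfolding R0_def by (metis real_sqrt_unique zero_le_dist)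
    qed
  next
    fix R assume "\<exists>c0\<in>affine hull {a, b, c}. dist c0 a = R \<and> dist c0 b = R \<and> dist c0 c = R"
    then obtain u v w where s: "u + v + w = 1"
      and d: "dist (u *\<^sub>R a + v *\<^sub>R b + w *\<^sub>R c) a = R" "dist (u *\<^sub>R a + v *\<^sub>R b + w *\<^sub>R c) b = R"
        "dist (u *\<^sub>R a + v *\<^sub>R b + w *\<^sub>R c) c = R"
      unfolding affine_hull_3 by blast
    have R0: "R \<ge> 0" using d(1) by auto
    have e1: "v^2 * E + 2 * v * w * M + w^2 * F = R^2" "(v-1)^2 * E + 2 * (v-1) * w * M + w^2 * F = R^2"
      "v^2 * E + 2 * v * (w-1) * M + (w-1)^2 * F = R^2" using sq[OF s] d by auto
    have l1: "2 * v * E + 2 * w * M = E" using e1(1,2) by (simp add: power2_eq_square algebra_simps)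
    have l2: "2 * v * M + 2 * w * F = F" using e1(1,3) by (simp add: power2_eq_square algebra_simps)
    have "F * (2 * v * E + 2 * w * M) - M * (2 * v * M + 2 * w * F) = F * E - M * F" using l1 l2 by simp
    then have "2 * v * G = F * (E - M)" by (simp add: G_def power2_eq_square algebra_simps)
    then have vv: "v = F * (E - M) / (2 * G)" using G0 by (simp add: field_simps)
    have "E * (2 * v * M + 2 * w * F) - M * (2 * v * E + 2 * w * M) = E * F - M * E" using l1 l2 by simp
    then have "2 * w * G = E * (F - M)" by (simp add: G_def power2_eq_square algebra_simps)
    then have ww: "w = E * (F - M) / (2 * G)" using G0 by (simp add: field_simps)
    have "R^2 = v^2 * E + 2 * v * w * M + w^2 * F" using e1(1) by simp
    also have "\<dots> = v * (2 * v * E + 2 * w * M) / 2 + w * (2 * v * M + 2 * w * F) / 2"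
      by (simp add: power2_eq_square field_simps)
    also have "\<dots> = (v * E + w * F) / 2" using l1 l2 by simp
    also have "\<dots> = E * F * (E + F - 2 * M) / (4 * G)"
      unfolding vv ww using G0 by (simp add: field_simps)
    finally have "R^2 = E * F * (E + F - 2 * M) / (4 * G)" .
    then show "R = R0" unfolding R0_def using R0 by (metis real_sqrt_unique)
  qed
qed


lemma inner3: "inner (p::real^3) q = p$1 * q$1 + p$2 * q$2 + p$3 * q$3"
  by (simp add: inner_vec_def sum_3)

lemma sqrt_sq_eq: "k \<ge> 0 \<Longrightarrow> k^2 = t \<Longrightarrow> sqrt t = k"
  using real_sqrt_unique by blast

theorem mainTheorem14:
  fixes x y z :: int
  assumes "primitive_pythagorean_triple x y z"
  defines "P \<equiv> vector [real_of_int x, real_of_int y, real_of_int z] :: real^3"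
  shows "inradius (matA *v P) (matB *v P) (matC *v P) =
           2 * x * y * sqrt 17 / (3 * x + 3 * y + sqrt (9 * x^2 - 16 * x * y + 9 * y^2)) \<and>
         circumradius (matA *v P) (matB *v P) (matC *v P) =
           9 * sqrt (9 * x^2 - 16 * x * y + 9 * y^2) / sqrt 17"
proof -
  define X where "X = real_of_int x"
  define Y where "Y = real_of_int y"
  define Z where "Z = real_of_int z"
  have X0: "X > 0" and Y0: "Y > 0" using assms(1) by (auto simp: primitive_pythagorean_triple_def X_def Y_def)
  define D where "D = 9 * X^2 - 16 * X * Y + 9 * Y^2"
  have D0: "D > 0"
  proof -
    have "0 \<le> 9 * (X - Y)^2" by simp
    then have "D \<ge> 2 * X * Y" by (simp add: D_def power2_eq_square algebra_simps)
    moreover have "2 * X * Y > 0" using X0 Y0 by simp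
    ultimately show ?thesis by linarith
  qed
  define a where "a = matA *v P"
  define b where "b = matB *v P"
  define c where "c = matC *v P"
  have PP: "P$1 = X" "P$2 = Y" "P$3 = Z" by (simp_all add: P_def X_def Y_def Z_def)
  have ca: "a$1 = X - 2*Y + 2*Z" "a$2 = 2*X - Y + 2*Z" "a$3 = 2*X - 2*Y + 3*Z"
    by (simp_all add: a_def matA_def matrix_vector_mult_def sum_3 PP)
  have cb: "b$1 = X + 2*Y + 2*Z" "b$2 = 2*X + Y + 2*Z" "b$3 = 2*X + 2*Y + 3*Z"
    by (simp_all add: b_def matB_def matrix_vector_mult_def sum_3 PP)
  have cc: "c$1 = -X + 2*Y + 2*Z" "c$2 = -2*X + Y + 2*Z" "c$3 = -2*X + 2*Y + 3*Z"
    by (simp_all add: c_def matC_def matrix_vector_mult_def sum_3 PP)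
  note cs = ca cb cc
  have i1: "inner (b-a) (b-a) = 36 * Y^2" by (simp add: inner3 cs power2_eq_square algebra_simps)
  have i2: "inner (b-a) (c-a) = 36 * Y^2 - 32 * X * Y" by (simp add: inner3 cs power2_eq_square algebra_simps)
  have i3: "inner (c-a) (c-a) = 4 * D" by (simp add: inner3 cs D_def power2_eq_square algebra_simps)
  have i4: "inner (a-b) (a-b) = 36 * Y^2" by (simp add: inner3 cs power2_eq_square algebra_simps)
  have i5: "inner (a-b) (c-b) = 32 * X * Y" by (simp add: inner3 cs power2_eq_square algebra_simps)
  have i6: "inner (c-b) (c-b) = 36 * X^2" by (simp add: inner3 cs power2_eq_square algebra_simps)
  have i7: "inner (b-c) (b-c) = 36 * X^2" by (simp add: inner3 cs power2_eq_square algebra_simps)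
  have i8: "inner (b-c) (a-c) = 36 * X^2 - 32 * X * Y" by (simp add: inner3 cs power2_eq_square algebra_simps)
  have i9: "inner (a-c) (a-c) = 4 * D" by (simp add: inner3 cs D_def power2_eq_square algebra_simps)
  have i10: "inner (c-a) (b-a) = 36 * Y^2 - 32 * X * Y" by (simp add: inner3 cs power2_eq_square algebra_simps)
  have ab: "a \<noteq> b" using i1 Y0 by auto
  have bc: "b \<noteq> c" using i7 X0 by auto
  have cA: "c \<noteq> a" using i3 D0 by auto
  have s17: "sqrt 17 > 0" by simp
  have sD: "sqrt D > 0" using D0 by simp
  have hA: "sqrt (inner (a-b) (a-b) - (inner (a-b) (c-b))^2 / inner (c-b) (c-b)) = 2 * sqrt 17 * Y / 3"
  proof (rule sqrt_sq_eq)
    show "0 \<le> 2 * sqrt 17 * Y / 3" using Y0 by simp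
    show "(2 * sqrt 17 * Y / 3)^2 = inner (a-b) (a-b) - (inner (a-b) (c-b))^2 / inner (c-b) (c-b)"
      unfolding i4 i5 i6 using X0 by (simp add: power2_eq_square field_simps)
  qed
  have hB: "sqrt (inner (b-c) (b-c) - (inner (b-c) (a-c))^2 / inner (a-c) (a-c)) = 2 * sqrt 17 * X * Y / sqrt D"
  proof (rule sqrt_sq_eq)
    show "0 \<le> 2 * sqrt 17 * X * Y / sqrt D" using X0 Y0 sD by simp
    have "(2 * sqrt 17 * X * Y / sqrt D)^2 = 68 * X^2 * Y^2 / D"
      using D0 by (simp add: power_divide power_mult_distrib)
    also have "\<dots> = inner (b-c) (b-c) - (inner (b-c) (a-c))^2 / inner (a-c) (a-c)"
      unfolding i7 i8 i9 using D0 by (simp add: D_def power2_eq_square field_simps)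
    finally show "(2 * sqrt 17 * X * Y / sqrt D)^2 = inner (b-c) (b-c) - (inner (b-c) (a-c))^2 / inner (a-c) (a-c)" .
  qed
  have hC: "sqrt (inner (c-a) (c-a) - (inner (c-a) (b-a))^2 / inner (b-a) (b-a)) = 2 * sqrt 17 * X / 3"
  proof (rule sqrt_sq_eq)
    show "0 \<le> 2 * sqrt 17 * X / 3" using X0 by simp
    show "(2 * sqrt 17 * X / 3)^2 = inner (c-a) (c-a) - (inner (c-a) (b-a))^2 / inner (b-a) (b-a)"
      unfolding i3 i10 i1 using Y0 by (simp add: D_def power2_eq_square field_simps)
  qed
  have inr: "inradius a b c = 1 / (1 / (2 * sqrt 17 * Y / 3) + 1 / (2 * sqrt 17 * X * Y / sqrt D) + 1 / (2 * sqrt 17 * X / 3))"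
    using inr_generic[OF ab bc cA] unfolding hA hB hC using X0 Y0 sD by simp
  also have "\<dots> = 2 * X * Y * sqrt 17 / (3 * X + 3 * Y + sqrt D)"
    using X0 Y0 sD s17 by (simp add: field_simps)
  finally have inr': "inradius a b c = 2 * X * Y * sqrt 17 / (3 * X + 3 * Y + sqrt D)" .
  have G: "inner (b-a) (b-a) * inner (c-a) (c-a) - (inner (b-a) (c-a))^2 = 272 * X^2 * Y^2"
    unfolding i1 i2 i3 by (simp add: D_def power2_eq_square algebra_simps)
  have "circumradius a b c = sqrt (81 * D / 17)"
  proof -
    have G0: "inner (b-a) (b-a) * inner (c-a) (c-a) - (inner (b-a) (c-a))^2 \<noteq> 0"
      unfolding G using X0 Y0 by simp
    have "circumradius a b c = sqrt (inner (b-a) (b-a) * inner (c-a) (c-a) * (inner (b-a) (b-a) + inner (c-a) (c-a) - 2 * inner (b-a) (c-a)) /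
       (4 * (inner (b-a) (b-a) * inner (c-a) (c-a) - (inner (b-a) (c-a))^2)))"
      by (rule circ_generic[OF G0])
    also have "\<dots> = sqrt (81 * D / 17)"
      unfolding G unfolding i1 i2 i3 using X0 Y0 by (simp add: D_def power2_eq_square field_simps)
    finally show ?thesis .
  qed
  also have "sqrt (81 * D / 17) = 9 * sqrt D / sqrt 17"
    by (simp add: real_sqrt_divide real_sqrt_mult)
  finally have cir: "circumradius a b c = 9 * sqrt D / sqrt 17" .
  show ?thesis using inr' cir unfolding a_def b_def c_def D_def X_def Y_def by simp
qed

end
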